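(* Let $I=\bigcup_{n\in\mathbb N}I_n$ be a partition of a countable set $I$ into nonempty finite pieces and let $\mathcal F$ be a $T$-family on $I$ with respect to this partition. Then for every $0<\lambda<1$ and every finitely supported sequence of scalars $(a_n)_n$, $$\lambda\Big\|\sum_n a_nu_n\Big\|_{\mathcal G_\lambda(\mathcal F)}\le\max\Big\{\Big\|\sum_n a_n\Big(\frac1{\#I_n}\sum_{j\in I_n}u_j\Big)\Big\|_{\mathcal F},\ \sup_n|a_n|\Big\}\le\Big\|\sum_na_nu_n\Big\|_{\mathcal G_+(\mathcal F)},$$ where on the left and right $(u_n)_{n\in\mathbb N}$ is the unit basis of $c_{00}(\mathbb N)$ and in the middle $(u_j)_{j\in I}$ is the unit basis of $c_{00}(I)$.
   Context: A family on a set $J$ is a collection of finite subsets of $J$. For a family $\mathcal H$ on $J$, $\|x\|_{\mathcal H}=\max\{\|x\|_\infty,\sup_{s\in\mathcal H}\sum_{j\in s}|(x)_j|\}$ for $x\in c_{00}(J)$. A family $\mathcal H$ is $n$-large in $J$ if for every infinite $K\subseteq J$ there is $s\in\mathcal H$ with $\#(s\cap K)\ge n$, and large in $J$ if it is $n$-large for every $n$; it is pre-compact if every set in its closure in $2^J$ (product topology) is finite. For $s\subseteq I$ finite and $0<\lambda<1$: $s[\lambda]=\{n: \#(s\cap I_n)\ge\lambda\#I_n\}$, $s[+]=\{n: s\cap I_n\neq\emptyset\}$, $\mathcal G_\lambda(\mathcal F)=\{s[\lambda]:s\in\mathcal F\}$, $\mathcal G_+(\mathcal F)=\{s[+]:s\in\mathcal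 F\}$ (families on $\mathbb N$). A pre-compact family $\mathcal F$ on $I$ is a $T$-family (w.r.t. $(I_n)_n$) if $\mathcal F$ is not large in any infinite $J\subseteq I$ and there is $0<\lambda\le1$ such that $\mathcal G_\lambda(\mathcal F)$ is large in $\mathbb N$. *)

theory Defs
  imports Complex_Main "HOL-Library.Countable_Set"
begin

definition family_on :: "'a set \<Rightarrow> 'a set set \<Rightarrow> bool" where
  "family_on J H \<longleftrightarrow> (\<forall>s\<in>H. finite s \<and> s \<subseteq> J)"

text \<open>The norm of x in c00(J) (x a real function on J with finite support, zero off J):
  max of the sup norm and the sup over s in H of the l1 norm of x restricted to s.\<close>
definition fam_norm :: "'a set \<Rightarrow> 'a set set \<Rightarrow> ('a \<Rightarrow> real) \<Rightarrow> real" where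
  "fam_norm J H x = Sup ({\<bar>x j\<bar> | j. j \<in> J} \<union> {(\<Sum>j\<in>s. \<bar>x j\<bar>) | s. s \<in> H})"

definition n_large :: "nat \<Rightarrow> 'a set \<Rightarrow> 'a set set \<Rightarrow> bool" where
  "n_large n J H \<longleftrightarrow> (\<forall>K. K \<subseteq> J \<and> infinite K \<longrightarrow> (\<exists>s\<in>H. card (s \<inter> K) \<ge> n))"

definition large :: "'a set \<Rightarrow> 'a set set \<Rightarrow> bool" where
  "large J H \<longleftrightarrow> (\<forall>n. n_large n J H)"

text \<open>Closure of H in 2^J with the product topology: A is in the closure iff every basic
  neighbourhood of A (sets agreeing with A on a finite G) meets H.\<close>
definition fam_closure :: "'a set \<Rightarrow> 'a set set \<Rightarrow> 'a set set" where
  "fam_closure J H = {A. A \<subseteq> J \<and> (\<forall>G. finite G \<and> G \<subseteq> J \<longrightarrow> (\<exists>s\<in>H. s \<inter> G = A \<inter> G))}"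

definition precompact :: "'a set \<Rightarrow> 'a set set \<Rightarrow> bool" where
  "precompact J H \<longleftrightarrow> (\<forall>A\<in>fam_closure J H. finite A)"

definition lam_set :: "(nat \<Rightarrow> 'a set) \<Rightarrow> real \<Rightarrow> 'a set \<Rightarrow> nat set" where
  "lam_set Ip lam s = {n. real (card (s \<inter> Ip n)) \<ge> lam * real (card (Ip n))}"

definition plus_set :: "(nat \<Rightarrow> 'a set) \<Rightarrow> 'a set \<Rightarrow> nat set" where
  "plus_set Ip s = {n. s \<inter> Ip n \<noteq> {}}"

definition G_lam :: "(nat \<Rightarrow> 'a set) \<Rightarrow> real \<Rightarrow> 'a set set \<Rightarrow> nat set set" where
  "G_lam Ip lam F = lam_set Ip lam ` F"

definition G_plus :: "(nat \<Rightarrow> 'a set) \<Rightarrow> 'a set set \<Rightarrow> nat set set" where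
  "G_plus Ip F = plus_set Ip ` F"

definition T_family :: "'a set \<Rightarrow> (nat \<Rightarrow> 'a set) \<Rightarrow> 'a set set \<Rightarrow> bool" where
  "T_family I Ip F \<longleftrightarrow> family_on I F \<and> precompact I F \<and>
     (\<forall>J. J \<subseteq> I \<and> infinite J \<longrightarrow> \<not> large J F) \<and>
     (\<exists>lam. 0 < lam \<and> lam \<le> 1 \<and> large (UNIV :: nat set) (G_lam Ip lam F))"

end

theory Submission
  imports Defs
begin

lemma delta_sum:
  fixes f :: "nat \<Rightarrow> real"
  assumes disj: "\<And>m n. m \<noteq> n \<Longrightarrow> Ip m \<inter> Ip n = {}" and jm: "j \<in> Ip m"
    and fin: "finite S"
  shows "(\<Sum>n\<in>S. f n * (if j \<in> Ip n then 1 else 0)) = (if m \<in> S then f m else 0)"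
proof -
  have "(\<Sum>n\<in>S. f n * (if j \<in> Ip n then 1 else 0)) = (\<Sum>n\<in>S. if m = n then f n else 0)"
  proof (rule sum.cong)
    fix n assume "n \<in> S"
    show "f n * (if j \<in> Ip n then 1 else 0) = (if m = n then f n else 0)"
      using disj[of m n] jm by auto
  qed simp
  also have "\<dots> = (if m \<in> S then f m else 0)" using fin by (simp add: sum.delta)
  finally show ?thesis .
qed

lemma absx:
  fixes a :: "nat \<Rightarrow> real"
  assumes disj: "\<And>m n. m \<noteq> n \<Longrightarrow> Ip m \<inter> Ip n = {}" and jm: "j \<in> Ip m"
    and fin: "finite {n. a n \<noteq> 0}"
  shows "\<bar>\<Sum>n\<in>{n. a n \<noteq> 0}. a n * ((1 / real (card (Ip n))) * (if j \<in> Ip n then 1 else 0))\<bar>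
     = \<bar>a m\<bar> / real (card (Ip m))"
    and "(\<Sum>n\<in>{n. a n \<noteq> 0}. \<bar>a n\<bar> / real (card (Ip n)) * (if j \<in> Ip n then 1 else 0))
     = \<bar>a m\<bar> / real (card (Ip m))"
proof -
  have "(\<Sum>n\<in>{n. a n \<noteq> 0}. a n * ((1 / real (card (Ip n))) * (if j \<in> Ip n then 1 else 0)))
    = (\<Sum>n\<in>{n. a n \<noteq> 0}. (a n / real (card (Ip n))) * (if j \<in> Ip n then 1 else 0))"
    by (rule sum.cong) auto
  also have "\<dots> = (if m \<in> {n. a n \<noteq> 0} then a m / real (card (Ip m)) else 0)"
    by (rule delta_sum[where Ip=Ip, OF disj jm fin])
  finally show "\<bar>\<Sum>n\<in>{n. a n \<noteq> 0}. a n * ((1 / real (card (Ip n))) * (if j \<in> Ip n then 1 else 0))\<bar>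
     = \<bar>a m\<bar> / real (card (Ip m))" by auto
  have "(\<Sum>n\<in>{n. a n \<noteq> 0}. \<bar>a n\<bar> / real (card (Ip n)) * (if j \<in> Ip n then 1 else 0))
    = (if m \<in> {n. a n \<noteq> 0} then \<bar>a m\<bar> / real (card (Ip m)) else 0)"
    by (rule delta_sum[where Ip=Ip, OF disj jm fin])
  then show "(\<Sum>n\<in>{n. a n \<noteq> 0}. \<bar>a n\<bar> / real (card (Ip n)) * (if j \<in> Ip n then 1 else 0))
     = \<bar>a m\<bar> / real (card (Ip m))" by auto
qed

lemma sumx:
  fixes a :: "nat \<Rightarrow> real"
  assumes disj: "\<And>m n. m \<noteq> n \<Longrightarrow> Ip m \<inter> Ip n = {}"
    and fin: "finite {n. a n \<noteq> 0}" and sfin: "finite s" and sub: "s \<subseteq> (\<Union>n. Ip n)"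
  shows "(\<Sum>j\<in>s. \<bar>\<Sum>n\<in>{n. a n \<noteq> 0}. a n * ((1 / real (card (Ip n))) * (if j \<in> Ip n then 1 else 0))\<bar>)
     = (\<Sum>n\<in>{n. a n \<noteq> 0}. \<bar>a n\<bar> / real (card (Ip n)) * real (card (s \<inter> Ip n)))"
proof -
  have "(\<Sum>j\<in>s. \<bar>\<Sum>n\<in>{n. a n \<noteq> 0}. a n * ((1 / real (card (Ip n))) * (if j \<in> Ip n then 1 else 0))\<bar>)
    = (\<Sum>j\<in>s. \<Sum>n\<in>{n. a n \<noteq> 0}. \<bar>a n\<bar> / real (card (Ip n)) * (if j \<in> Ip n then 1 else 0))"
  proof (rule sum.cong)
    fix j assume "j \<in> s"
    then obtain m where jm: "j \<in> Ip m" using sub by auto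
    show "\<bar>\<Sum>n\<in>{n. a n \<noteq> 0}. a n * ((1 / real (card (Ip n))) * (if j \<in> Ip n then 1 else 0))\<bar>
      = (\<Sum>n\<in>{n. a n \<noteq> 0}. \<bar>a n\<bar> / real (card (Ip n)) * (if j \<in> Ip n then 1 else 0))"
      using absx[where Ip=Ip, OF disj jm fin] by simp
  qed simp
  also have "\<dots> = (\<Sum>n\<in>{n. a n \<noteq> 0}. \<Sum>j\<in>s. \<bar>a n\<bar> / real (card (Ip n)) * (if j \<in> Ip n then 1 else 0))"
    by (rule sum.swap)
  also have "\<dots> = (\<Sum>n\<in>{n. a n \<noteq> 0}. \<bar>a n\<bar> / real (card (Ip n)) * real (card (s \<inter> Ip n)))"
  proof (rule sum.cong)
    fix n
    have "(\<Sum>j\<in>s. (if j \<in> Ip n then 1 else 0) :: real) = real (card (s \<inter> Ip n))"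
      using sfin by (simp add: sum.If_cases Int_def)
    then show "(\<Sum>j\<in>s. \<bar>a n\<bar> / real (card (Ip n)) * (if j \<in> Ip n then 1 else 0))
       = \<bar>a n\<bar> / real (card (Ip n)) * real (card (s \<inter> Ip n))"
      by (subst sum_distrib_left[symmetric]) simp
  qed simp
  finally show ?thesis .
qed

lemma sum_le_T:
  fixes a :: "nat \<Rightarrow> real"
  assumes fin: "finite {n. a n \<noteq> 0}"
  shows "(\<Sum>n\<in>X. \<bar>a n\<bar>) \<le> (\<Sum>n\<in>{n. a n \<noteq> 0}. \<bar>a n\<bar>)"
proof (cases "finite X")
  case True
  have "(\<Sum>n\<in>X. \<bar>a n\<bar>) = (\<Sum>n\<in>X \<inter> {n. a n \<noteq> 0}. \<bar>a n\<bar>)"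
    using True by (intro sum.mono_neutral_right) auto
  also have "\<dots> \<le> (\<Sum>n\<in>{n. a n \<noteq> 0}. \<bar>a n\<bar>)"
    using fin by (intro sum_mono2) auto
  finally show ?thesis .
next
  case False
  then show ?thesis by (simp add: sum_nonneg)
qed

theorem proposition4p3:
  fixes I :: "'a set" and Ip :: "nat \<Rightarrow> 'a set" and F :: "'a set set"
    and lam :: real and a :: "nat \<Rightarrow> real"
  assumes "countable I"
    and "I = (\<Union>n. Ip n)"
    and "\<And>n. finite (Ip n)" and "\<And>n. Ip n \<noteq> {}"
    and "\<And>m n. m \<noteq> n \<Longrightarrow> Ip m \<inter> Ip n = {}"
    and "T_family I Ip F"
    and "0 < lam" and "lam < 1"
    and "finite {n. a n \<noteq> 0}"
  shows "lam * fam_norm UNIV (G_lam Ip lam F) a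
           \<le> max (fam_norm I F (\<lambda>j. \<Sum>n\<in>{n. a n \<noteq> 0}.
                      a n * ((1 / real (card (Ip n))) * (if j \<in> Ip n then 1 else 0))))
                 (Sup (range (\<lambda>n. \<bar>a n\<bar>)))
         \<and> max (fam_norm I F (\<lambda>j. \<Sum>n\<in>{n. a n \<noteq> 0}.
                      a n * ((1 / real (card (Ip n))) * (if j \<in> Ip n then 1 else 0))))
                 (Sup (range (\<lambda>n. \<bar>a n\<bar>)))
           \<le> fam_norm UNIV (G_plus Ip F) a"
proof -
  note I = assms(2) and fIp = assms(3) and ne = assms(4) and disj = assms(5)
  note lam0 = assms(7) and lam1 = assms(8) and fin = assms(9)
  define S where "S = {n. a n \<noteq> 0}"
  define T where "T = (\<Sum>n\<in>S. \<bar>a n\<bar>)"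
  define x where "x = (\<lambda>j. \<Sum>n\<in>{n. a n \<noteq> 0}.
                      a n * ((1 / real (card (Ip n))) * (if j \<in> Ip n then 1 else 0)))"
  have famF: "\<And>s. s \<in> F \<Longrightarrow> finite s \<and> s \<subseteq> I"
    using assms(6) unfolding T_family_def family_on_def by auto
  have cpos: "\<And>n. real (card (Ip n)) > 0" using fIp ne by (simp add: card_gt_0_iff)
  have aT: "\<And>n. \<bar>a n\<bar> \<le> T"
  proof -
    fix n show "\<bar>a n\<bar> \<le> T" using sum_le_T[OF fin, of "{n}"] by (simp add: T_def S_def)
  qed
  have XT: "\<And>X. (\<Sum>n\<in>X. \<bar>a n\<bar>) \<le> T"
    using sum_le_T[OF fin] by (simp add: T_def S_def)
  have xj: "\<And>j m. j \<in> Ip m \<Longrightarrow> \<bar>x j\<bar> = \<bar>a m\<bar> / real (card (Ip m))"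
    unfolding x_def using absx(1)[where Ip=Ip, OF disj _ fin] by blast
  have xj_le: "\<And>j m. j \<in> Ip m \<Longrightarrow> \<bar>x j\<bar> \<le> \<bar>a m\<bar>"
  proof -
    fix j m assume "j \<in> Ip m"
    then have "\<bar>x j\<bar> = \<bar>a m\<bar> / real (card (Ip m))" by (rule xj)
    also have "\<dots> \<le> \<bar>a m\<bar> / 1"
    proof (rule divide_left_mono)
      show "1 \<le> real (card (Ip m))" using cpos[of m] by (simp add: Suc_le_eq)
    qed (use cpos[of m] in auto)
    finally show "\<bar>x j\<bar> \<le> \<bar>a m\<bar>" by simp
  qed
  have sx: "\<And>s. s \<in> F \<Longrightarrow> (\<Sum>j\<in>s. \<bar>x j\<bar>)
      = (\<Sum>n\<in>S. \<bar>a n\<bar> / real (card (Ip n)) * real (card (s \<inter> Ip n)))"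
    unfolding x_def S_def using sumx[where Ip=Ip, OF disj fin] famF I by blast
  have ratio: "\<And>s n. finite s \<Longrightarrow> real (card (s \<inter> Ip n)) / real (card (Ip n)) \<le> 1"
    using cpos fIp by (simp add: card_mono)
  define AN where "AN = ({\<bar>x j\<bar> | j. j \<in> I} \<union> {(\<Sum>j\<in>s. \<bar>x j\<bar>) | s. s \<in> F})"
  define AL where "AL = ({\<bar>a j\<bar> | j. j \<in> (UNIV::nat set)} \<union> {(\<Sum>j\<in>s. \<bar>a j\<bar>) | s. s \<in> G_lam Ip lam F})"
  define AP where "AP = ({\<bar>a j\<bar> | j. j \<in> (UNIV::nat set)} \<union> {(\<Sum>j\<in>s. \<bar>a j\<bar>) | s. s \<in> G_plus Ip F})"
  have N: "fam_norm I F x = Sup AN" unfolding AN_def fam_norm_def by simp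
  have L: "fam_norm UNIV (G_lam Ip lam F) a = Sup AL" unfolding AL_def fam_norm_def by simp
  have P: "fam_norm UNIV (G_plus Ip F) a = Sup AP" unfolding AP_def fam_norm_def by simp
  have bAL: "bdd_above AL" unfolding AL_def bdd_above_def using aT XT by blast
  have bAP: "bdd_above AP" unfolding AP_def bdd_above_def using aT XT by blast
  have sxT: "\<And>s. s \<in> F \<Longrightarrow> (\<Sum>j\<in>s. \<bar>x j\<bar>) \<le> T"
  proof -
    fix s assume sF: "s \<in> F"
    have "(\<Sum>j\<in>s. \<bar>x j\<bar>) = (\<Sum>n\<in>S. \<bar>a n\<bar> * (real (card (s \<inter> Ip n)) / real (card (Ip n))))"
      using sx[OF sF] by (simp add: field_simps)
    also have "\<dots> \<le> (\<Sum>n\<in>S. \<bar>a n\<bar>)"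
      by (rule sum_mono) (rule mult_left_le[OF ratio[OF conjunct1[OF famF[OF sF]]] abs_ge_zero])
    finally show "(\<Sum>j\<in>s. \<bar>x j\<bar>) \<le> T" by (simp add: T_def)
  qed
  have bAN: "bdd_above AN" unfolding AN_def bdd_above_def
  proof (intro exI[of _ T] ballI)
    fix y assume "y \<in> {\<bar>x j\<bar> | j. j \<in> I} \<union> {(\<Sum>j\<in>s. \<bar>x j\<bar>) | s. s \<in> F}"
    then show "y \<le> T"
    proof
      assume "y \<in> {\<bar>x j\<bar> | j. j \<in> I}"
      then obtain j m where "y = \<bar>x j\<bar>" "j \<in> Ip m" using I by auto
      then show ?thesis using xj_le aT order_trans by blast
    next
      assume "y \<in> {(\<Sum>j\<in>s. \<bar>x j\<bar>) | s. s \<in> F}"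
      then show ?thesis using sxT by auto
    qed
  qed
  have bR: "bdd_above (range (\<lambda>n. \<bar>a n\<bar>))" using aT by (auto simp: bdd_above_def)
  define M where "M = Sup (range (\<lambda>n. \<bar>a n\<bar>))"
  have aM: "\<And>n. \<bar>a n\<bar> \<le> M" unfolding M_def using bR by (simp add: cSup_upper)
  have M0: "0 \<le> M" using aM[of 0] by linarith
  have left: "lam * Sup AL \<le> max (Sup AN) M"
  proof -
    have "Sup AL \<le> max (Sup AN) M / lam"
    proof (rule cSup_least)
      show "AL \<noteq> {}" unfolding AL_def by auto
    next
      fix y assume "y \<in> AL"
      have "lam * y \<le> max (Sup AN) M"
        using \<open>y \<in> AL\<close> unfolding AL_def
      proof
        assume "y \<in> {\<bar>a j\<bar> | j. j \<in> (UNIV::nat set)}"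
        then obtain j where y: "y = \<bar>a j\<bar>" by auto
        have "lam * y \<le> y" unfolding y by (rule mult_left_le_one_le) (use lam0 lam1 in auto)
        also have "\<dots> \<le> M" using y aM by simp
        finally show ?thesis by simp
      next
        assume "y \<in> {(\<Sum>j\<in>s. \<bar>a j\<bar>) | s. s \<in> G_lam Ip lam F}"
        then obtain s where sF: "s \<in> F" and y: "y = (\<Sum>n\<in>lam_set Ip lam s. \<bar>a n\<bar>)"
          unfolding G_lam_def by auto
        define t where "t = lam_set Ip lam s"
        have "lam * y \<le> (\<Sum>j\<in>s. \<bar>x j\<bar>)"
        proof (cases "finite t")
          case False
          then have "y = 0" using y t_def by simp
          then show ?thesis by (simp add: sum_nonneg)
        next
          case True
          have "lam * y = (\<Sum>n\<in>t \<inter> S. lam * \<bar>a n\<bar>)"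
          proof -
            have "y = (\<Sum>n\<in>t \<inter> S. \<bar>a n\<bar>)" unfolding y t_def[symmetric]
              using True by (intro sum.mono_neutral_right) (auto simp: S_def)
            then show ?thesis by (simp add: sum_distrib_left)
          qed
          also have "\<dots> \<le> (\<Sum>n\<in>t \<inter> S. \<bar>a n\<bar> / real (card (Ip n)) * real (card (s \<inter> Ip n)))"
          proof (rule sum_mono)
            fix n assume "n \<in> t \<inter> S"
            then have "real (card (s \<inter> Ip n)) \<ge> lam * real (card (Ip n))"
              unfolding t_def lam_set_def by auto
            then have "lam \<le> real (card (s \<inter> Ip n)) / real (card (Ip n))"
              using cpos[of n] by (simp add: field_simps)
            then show "lam * \<bar>a n\<bar> \<le> \<bar>a n\<bar> / real (card (Ip n)) * real (card (s \<inter> Ip n))"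
            proof -
              have "lam * \<bar>a n\<bar> \<le> (real (card (s \<inter> Ip n)) / real (card (Ip n))) * \<bar>a n\<bar>"
                by (rule mult_right_mono) (use \<open>lam \<le> _\<close> in auto)
              then show ?thesis by (simp add: mult.commute)
            qed
          qed
          also have "\<dots> \<le> (\<Sum>n\<in>S. \<bar>a n\<bar> / real (card (Ip n)) * real (card (s \<inter> Ip n)))"
            using fin by (intro sum_mono2) (auto simp: S_def)
          also have "\<dots> = (\<Sum>j\<in>s. \<bar>x j\<bar>)" using sx[OF sF] by simp
          finally show ?thesis .
        qed
        also have "\<dots> \<le> Sup AN" using bAN sF by (intro cSup_upper) (auto simp: AN_def)
        finally show ?thesis by simp
      qed
      then have "y * lam \<le> max (Sup AN) M" by (simp only: mult.commute)
      then show "y \<le> max (Sup AN) M / lam" by (simp only: pos_le_divide_eq[OF lam0])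
    qed
    then have "Sup AL * lam \<le> max (Sup AN) M" by (simp only: pos_le_divide_eq[OF lam0])
    then show ?thesis by (simp only: mult.commute)
  qed
  have aP: "\<And>n. \<bar>a n\<bar> \<le> Sup AP" using bAP by (intro cSup_upper) (auto simp: AP_def)
  have MP: "M \<le> Sup AP" unfolding M_def using aP by (intro cSup_least) auto
  have NP: "Sup AN \<le> Sup AP"
  proof (rule cSup_least)
    obtain j where "j \<in> Ip 0" using ne[of 0] by blast
    then have "\<bar>x j\<bar> \<in> AN" unfolding AN_def I by blast
    then show "AN \<noteq> {}" by blast
  next
    fix y assume "y \<in> AN"
    then show "y \<le> Sup AP" unfolding AN_def
    proof
      assume "y \<in> {\<bar>x j\<bar> | j. j \<in> I}"
      then obtain j m where "y = \<bar>x j\<bar>" "j \<in> Ip m" using I by auto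
      then show ?thesis using xj_le[of j m] aP[of m] by linarith
    next
      assume "y \<in> {(\<Sum>j\<in>s. \<bar>x j\<bar>) | s. s \<in> F}"
      then obtain s where sF: "s \<in> F" and y: "y = (\<Sum>j\<in>s. \<bar>x j\<bar>)" by auto
      define p where "p = plus_set Ip s"
      have sfin: "finite s" using famF[OF sF] by simp
      have pfin: "finite p"
      proof -
        have "p \<subseteq> (\<Union>j\<in>s. {n. j \<in> Ip n})" unfolding p_def plus_set_def by auto
        moreover have "finite {n. j \<in> Ip n}" for j
        proof (cases "\<exists>m. j \<in> Ip m")
          case True
          then obtain m where "j \<in> Ip m" by auto
          then have "{n. j \<in> Ip n} \<subseteq> {m}" using disj by auto
          then show ?thesis by (rule finite_subset) simp
        qed simp
        then have "finite (\<Union>j\<in>s. {n. j \<in> Ip n})" using sfin by (intro finite_UN_I)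
        ultimately show ?thesis by (rule finite_subset)
      qed
      have "y = (\<Sum>n\<in>S. \<bar>a n\<bar> / real (card (Ip n)) * real (card (s \<inter> Ip n)))"
        using y sx[OF sF] by simp
      also have "\<dots> = (\<Sum>n\<in>S \<inter> p. \<bar>a n\<bar> / real (card (Ip n)) * real (card (s \<inter> Ip n)))"
        using fin by (intro sum.mono_neutral_right) (auto simp: S_def p_def plus_set_def)
      also have "\<dots> \<le> (\<Sum>n\<in>S \<inter> p. \<bar>a n\<bar>)"
      proof (rule sum_mono)
        fix n
        have "\<bar>a n\<bar> / real (card (Ip n)) * real (card (s \<inter> Ip n))
            = \<bar>a n\<bar> * (real (card (s \<inter> Ip n)) / real (card (Ip n)))" by simp
        also have "\<dots> \<le> \<bar>a n\<bar>" by (rule mult_left_le[OF ratio[OF sfin] abs_ge_zero])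
        finally show "\<bar>a n\<bar> / real (card (Ip n)) * real (card (s \<inter> Ip n)) \<le> \<bar>a n\<bar>" .
      qed
      also have "\<dots> \<le> (\<Sum>n\<in>p. \<bar>a n\<bar>)" using pfin by (intro sum_mono2) auto
      also have "\<dots> \<le> Sup AP"
      proof -
        have "(\<Sum>n\<in>p. \<bar>a n\<bar>) \<in> AP" unfolding AP_def G_plus_def p_def using sF by blast
        then show ?thesis using bAP by (rule cSup_upper)
      qed
      finally show ?thesis .
    qed
  qed
  have N': "fam_norm I F (\<lambda>j. \<Sum>n\<in>{n. a n \<noteq> 0}.
                      a n * ((1 / real (card (Ip n))) * (if j \<in> Ip n then 1 else 0))) = Sup AN"
    using N unfolding x_def .
  show ?thesis
    unfolding N' L P M_def[symmetric] using left MP NP by auto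
qed

end
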